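(* Let $i=\lambda x.x$ and $\Omega=(\lambda x.x\,x)(\lambda x.x\,x)$. Then $\mathcal{S}k.i \simeq_{\mathrm{ctx}} (\mathcal{S}k.i)\,\Omega$, but $\mathcal{S}k.i \not\sim (\mathcal{S}k.i)\,\Omega$.
   Context: The calculus $\lambda_{\mathcal S}$. Terms: $t ::= x \mid \lambda x.t \mid t\,t \mid \mathcal{S}k.t \mid \langle t\rangle$ (shift and reset); values: $v ::= \lambda x.t \mid x$. $\lambda x.t$ binds $x$, $\mathcal{S}k.t$ binds $k$; terms up to $\alpha$-conversion; capture-avoiding substitution $t\{v/x\}$. Pure contexts $F ::= [\,] \mid v\,F \mid F\,t$; evaluation contexts $E ::= [\,] \mid v\,E \mid E\,t \mid \langle E\rangle$; general contexts $C ::= [\,] \mid \lambda x.C \mid t\,C \mid C\,t \mid \mathcal{S}k.C \mid \langle C\rangle$. Reduction: $E[(\lambda x.t)\,v] \to E[t\{v/x\}]$; $E[\langle F[\mathcal{S}k.t]\rangle] \to E[\langle t\{\lambda x.\langle F[x]\rangle/k\}\rangle]$ ($x\notin\mathrm{fv}(F)$); $E[\langle v\rangle]\to E[v]$. $t\Downarrow t'$ iff $t\to^*t'$ and $t'$ irreducible. Stuck: not a value and irreducible; normal form: value or stuck; control stuck: $F[\mathcal{S}k.t]$; open stuck: $E[x\,v]$. Fresh: not free in the terms/contexts considered. $t_0\simeq_{\mathrm{ctx}}t_1$ iff for every context $C$ with $C[t_0],C[t_1]$ closed: $C[t_0]\Downarrow$ a value implies $C[t_1]\Downarrow$ a value;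 $C[t_0]\Downarrow$ a control stuck term implies $C[t_1]\Downarrow$ a control stuck term; and conversely. Normal form bisimilarity $\sim$: for a relation $\mathcal R$ on terms, extend to evaluation contexts by $E_0\mathrel{\mathcal R}E_1$ iff either $E_0=E_0'[\langle F_0\rangle]$, $E_1=E_1'[\langle F_1\rangle]$ ($F_i$ pure) with $E_0'[x]\mathrel{\mathcal R}E_1'[x]$ and $\langle F_0[x]\rangle\mathrel{\mathcal R}\langle F_1[x]\rangle$ ($x$ fresh), or $E_0=F_0$, $E_1=F_1$ pure with $F_0[x]\mathrel{\mathcal R}F_1[x]$ ($x$ fresh). $v\mathbin{@}y$ is $x\,y$ if $v=x$, $t\{y/x\}$ if $v=\lambda x.t$. $\mathcal R^{\mathrm{nf}}$: $v_0\mathrel{\mathcal R^{\mathrm{nf}}}v_1$ if $v_0\mathbin{@}x\mathrel{\mathcal R}v_1\mathbin{@}x$ ($x$ fresh); $F_0[\mathcal{S}k.t_0]\mathrel{\mathcal R^{\mathrm{nf}}}F_1[\mathcal{S}k.t_1]$ if $F_0\mathrel{\mathcal R}F_1$ and $\langle t_0\rangle\mathrel{\mathcal R}\langle t_1\rangle$; $E_0[x\,v_0]\mathrel{\mathcal R^{\mathrm{nf}}}E_1[x\,v_1]$ if $E_0\mathrel{\mathcal R}E_1$ and $v_0\mathrel{\mathcal R^{\mathrm{nf}}}v_1$. $\mathcal R$ is a normal form simulation if $t_0\mathrel{\mathcal R}t_1$, $t_0\Downarrow t_0'$ imply $t_1\Downarrow t_1'$ with $t_0'\mathrel{\mathcal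 R^{\mathrm{nf}}}t_1'$; a bisimulation if $\mathcal R$ and $\mathcal R^{-1}$ are simulations; $\sim$ is the largest one. *)

theory Defs
  imports Main
begin

text \<open>Terms up to alpha-conversion are represented with de Bruijn indices.
  Lam binds x (index 0 in its body), Shift binds k (index 0 in its body),
  Reset is the delimiter.\<close>

datatype trm = Var nat | Lam trm | App trm trm | Shift trm | Reset trm

fun is_val :: "trm \<Rightarrow> bool" where
  "is_val (Var _) = True"
| "is_val (Lam _) = True"
| "is_val _ = False"

fun lift :: "nat \<Rightarrow> trm \<Rightarrow> trm" where
  "lift k (Var i) = (if i < k then Var i else Var (Suc i))"
| "lift k (Lam t) = Lam (lift (Suc k) t)"
| "lift k (App t u) = App (lift k t) (lift k u)"
| "lift k (Shift t) = Shift (lift (Suc k) t)"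
| "lift k (Reset t) = Reset (lift k t)"

fun subst :: "trm \<Rightarrow> nat \<Rightarrow> trm \<Rightarrow> trm" where
  "subst (Var i) k v = (if i = k then v else if k < i then Var (i - 1) else Var i)"
| "subst (Lam t) k v = Lam (subst t (Suc k) (lift 0 v))"
| "subst (App t u) k v = App (subst t k v) (subst u k v)"
| "subst (Shift t) k v = Shift (subst t (Suc k) (lift 0 v))"
| "subst (Reset t) k v = Reset (subst t k v)"

fun fvs :: "trm \<Rightarrow> nat set" where
  "fvs (Var i) = {i}"
| "fvs (Lam t) = (\<lambda>n. n - 1) ` (fvs t - {0})"
| "fvs (App t u) = fvs t \<union> fvs u"
| "fvs (Shift t) = (\<lambda>n. n - 1) ` (fvs t - {0})"
| "fvs (Reset t) = fvs t"

definition closed :: "trm \<Rightarrow> bool" where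
  "closed t \<longleftrightarrow> fvs t = {}"

text \<open>Evaluation contexts E ::= [] | v E | E t | <E>; pure contexts are
  evaluation contexts without Reset.\<close>
datatype ectx = EHole | EArgV trm ectx | EFun ectx trm | EReset ectx

fun plugE :: "ectx \<Rightarrow> trm \<Rightarrow> trm" where
  "plugE EHole t = t"
| "plugE (EArgV v E) t = App v (plugE E t)"
| "plugE (EFun E u) t = App (plugE E t) u"
| "plugE (EReset E) t = Reset (plugE E t)"

fun ectx_ok :: "ectx \<Rightarrow> bool" where
  "ectx_ok EHole = True"
| "ectx_ok (EArgV v E) = (is_val v \<and> ectx_ok E)"
| "ectx_ok (EFun E u) = ectx_ok E"
| "ectx_ok (EReset E) = ectx_ok E"

fun pure :: "ectx \<Rightarrow> bool" where
  "pure EHole = True"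
| "pure (EArgV v E) = (is_val v \<and> pure E)"
| "pure (EFun E u) = pure E"
| "pure (EReset E) = False"

fun ecomp :: "ectx \<Rightarrow> ectx \<Rightarrow> ectx" where
  "ecomp EHole E2 = E2"
| "ecomp (EArgV v E) E2 = EArgV v (ecomp E E2)"
| "ecomp (EFun E u) E2 = EFun (ecomp E E2) u"
| "ecomp (EReset E) E2 = EReset (ecomp E E2)"

fun liftE :: "ectx \<Rightarrow> ectx" where
  "liftE EHole = EHole"
| "liftE (EArgV v E) = EArgV (lift 0 v) (liftE E)"
| "liftE (EFun E u) = EFun (liftE E) (lift 0 u)"
| "liftE (EReset E) = EReset (liftE E)"

text \<open>General contexts (plugging may capture variables).\<close>
datatype cctx = CHole | CLam cctx | CAppL trm cctx | CAppR cctx trm | CShift cctx | CReset cctx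

fun plugC :: "cctx \<Rightarrow> trm \<Rightarrow> trm" where
  "plugC CHole t = t"
| "plugC (CLam C) t = Lam (plugC C t)"
| "plugC (CAppL u C) t = App u (plugC C t)"
| "plugC (CAppR C u) t = App (plugC C t) u"
| "plugC (CShift C) t = Shift (plugC C t)"
| "plugC (CReset C) t = Reset (plugC C t)"

inductive red :: "trm \<Rightarrow> trm \<Rightarrow> bool" where
  beta: "\<lbrakk>ectx_ok E; is_val v\<rbrakk> \<Longrightarrow>
     red (plugE E (App (Lam t) v)) (plugE E (subst t 0 v))"
| shift: "\<lbrakk>ectx_ok E; pure F\<rbrakk> \<Longrightarrow>
     red (plugE E (Reset (plugE F (Shift t))))
         (plugE E (Reset (subst t 0 (Lam (Reset (plugE (liftE F) (Var 0)))))))"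
| reset: "\<lbrakk>ectx_ok E; is_val v\<rbrakk> \<Longrightarrow>
     red (plugE E (Reset v)) (plugE E v)"

definition irreducible :: "trm \<Rightarrow> bool" where
  "irreducible t \<longleftrightarrow> (\<nexists>u. red t u)"

definition evals :: "trm \<Rightarrow> trm \<Rightarrow> bool" where
  "evals t t' \<longleftrightarrow> red\<^sup>*\<^sup>* t t' \<and> irreducible t'"

definition control_stuck :: "trm \<Rightarrow> bool" where
  "control_stuck t \<longleftrightarrow> (\<exists>F s. pure F \<and> t = plugE F (Shift s))"

definition ctx_equiv :: "trm \<Rightarrow> trm \<Rightarrow> bool" where
  "ctx_equiv t0 t1 \<longleftrightarrow>
    (\<forall>C. closed (plugC C t0) \<and> closed (plugC C t1) \<longrightarrow>
      ((\<exists>v. evals (plugC C t0) v \<and> is_val v) \<longleftrightarrow> (\<exists>v. evals (plugC C t1) v \<and> is_val v)) \<and>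
      ((\<exists>u. evals (plugC C t0) u \<and> control_stuck u) \<longleftrightarrow>
       (\<exists>u. evals (plugC C t1) u \<and> control_stuck u)))"

text \<open>Fresh variables: a term/context is lifted by one and the fresh variable is index 0.\<close>

definition ctx_rel :: "(trm \<Rightarrow> trm \<Rightarrow> bool) \<Rightarrow> ectx \<Rightarrow> ectx \<Rightarrow> bool" where
  "ctx_rel R E0 E1 \<longleftrightarrow>
    (\<exists>E0' F0 E1' F1. pure F0 \<and> pure F1 \<and>
        E0 = ecomp E0' (EReset F0) \<and> E1 = ecomp E1' (EReset F1) \<and>
        R (plugE (liftE E0') (Var 0)) (plugE (liftE E1') (Var 0)) \<and>
        R (Reset (plugE (liftE F0) (Var 0))) (Reset (plugE (liftE F1) (Var 0))))
    \<or> (pure E0 \<and> pure E1 \<and> R (plugE (liftE E0) (Var 0)) (plugE (liftE E1) (Var 0)))"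

text \<open>v @ y for a fresh y (after lifting v, y is index 0).\<close>
fun app_fresh :: "trm \<Rightarrow> trm" where
  "app_fresh (Var n) = App (Var (Suc n)) (Var 0)"
| "app_fresh (Lam t) = t"
| "app_fresh t = t"

definition nf_rel :: "(trm \<Rightarrow> trm \<Rightarrow> bool) \<Rightarrow> trm \<Rightarrow> trm \<Rightarrow> bool" where
  "nf_rel R t0 t1 \<longleftrightarrow>
    (is_val t0 \<and> is_val t1 \<and> R (app_fresh t0) (app_fresh t1))
  \<or> (\<exists>F0 F1 s0 s1. pure F0 \<and> pure F1 \<and>
       t0 = plugE F0 (Shift s0) \<and> t1 = plugE F1 (Shift s1) \<and>
       ctx_rel R F0 F1 \<and> R (Reset s0) (Reset s1))
  \<or> (\<exists>E0 E1 x v0 v1. ectx_ok E0 \<and> ectx_ok E1 \<and> is_val v0 \<and> is_val v1 \<and>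
       t0 = plugE E0 (App (Var x) v0) \<and> t1 = plugE E1 (App (Var x) v1) \<and>
       ctx_rel R E0 E1 \<and> R (app_fresh v0) (app_fresh v1))"

definition nf_sim :: "(trm \<Rightarrow> trm \<Rightarrow> bool) \<Rightarrow> bool" where
  "nf_sim R \<longleftrightarrow> (\<forall>t0 t1 t0'. R t0 t1 \<longrightarrow> evals t0 t0' \<longrightarrow>
                    (\<exists>t1'. evals t1 t1' \<and> nf_rel R t0' t1'))"

definition nf_bisim :: "(trm \<Rightarrow> trm \<Rightarrow> bool) \<Rightarrow> bool" where
  "nf_bisim R \<longleftrightarrow> nf_sim R \<and> nf_sim R\<inverse>\<inverse>"

definition nf_bisimilar :: "trm \<Rightarrow> trm \<Rightarrow> bool" where
  "nf_bisimilar t0 t1 \<longleftrightarrow> (\<exists>R. nf_bisim R \<and> R t0 t1)"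

definition I_trm :: trm where "I_trm = Lam (Var 0)"
definition Omega :: trm where
  "Omega = App (Lam (App (Var 0) (Var 0))) (Lam (App (Var 0) (Var 0)))"

end

theory Submission
  imports Defs
begin

inductive S :: "trm \<Rightarrow> trm \<Rightarrow> bool" where
  base: "S (Shift I_trm) (App (Shift I_trm) Omega)"
| var: "S (Var i) (Var i)"
| lam: "S t t' \<Longrightarrow> S (Lam t) (Lam t')"
| app: "S t t' \<Longrightarrow> S u u' \<Longrightarrow> S (App t u) (App t' u')"
| shf: "S t t' \<Longrightarrow> S (Shift t) (Shift t')"
| rst: "S t t' \<Longrightarrow> S (Reset t) (Reset t')"

inductive_cases S_AppL: "S (App a b) u"
inductive_cases S_LamL: "S (Lam a) u"
inductive_cases S_ResetL: "S (Reset a) u"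
inductive_cases S_ShiftL: "S (Shift a) u"
inductive_cases S_VarL: "S (Var i) u"
inductive_cases S_AppR: "S t (App a b)"
inductive_cases S_LamR: "S t (Lam a)"
inductive_cases S_ResetR: "S t (Reset a)"
inductive_cases S_ShiftR: "S t (Shift a)"
inductive_cases S_VarR: "S t (Var i)"

lemma S_refl: "S t t"
  by (induction t) (auto intro: S.intros)

lemma lift_I[simp]: "lift k I_trm = I_trm"
  by (simp add: I_trm_def)
lemma lift_Omega[simp]: "lift k Omega = Omega"
  by (simp add: Omega_def)
lemma subst_I[simp]: "subst I_trm k v = I_trm"
  by (simp add: I_trm_def)
lemma subst_Omega[simp]: "subst Omega k v = Omega"
  by (simp add: Omega_def)
lemma Omega_not_val[simp]: "\<not> is_val Omega"
  by (simp add: Omega_def)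

lemma S_lift: "S t t' \<Longrightarrow> S (lift k t) (lift k t')"
  by (induction arbitrary: k rule: S.induct) (auto intro: S.intros)

lemma S_subst: "S t t' \<Longrightarrow> S v v' \<Longrightarrow> S (subst t k v) (subst t' k v')"
  apply (induction arbitrary: k v v' rule: S.induct)
       apply (auto intro!: S.intros)
   apply (metis S_lift)+
  done

lemma S_val: "S v v' \<Longrightarrow> is_val v = is_val v'"
  by (induction rule: S.induct) auto

inductive SE :: "ectx \<Rightarrow> ectx \<Rightarrow> bool" where
  "SE EHole EHole"
| "S v v' \<Longrightarrow> SE E E' \<Longrightarrow> SE (EArgV v E) (EArgV v' E')"
| "SE E E' \<Longrightarrow> S u u' \<Longrightarrow> SE (EFun E u) (EFun E' u')"
| "SE E E' \<Longrightarrow> SE (EReset E) (EReset E')"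

lemma SE_plug: "SE E E' \<Longrightarrow> S a b \<Longrightarrow> S (plugE E a) (plugE E' b)"
  by (induction rule: SE.induct) (auto intro: S.intros)

lemma SE_lift: "SE E E' \<Longrightarrow> SE (liftE E) (liftE E')"
  by (induction rule: SE.induct) (auto intro: SE.intros S_lift)

lemma SE_ok: "SE E E' \<Longrightarrow> ectx_ok E = ectx_ok E'"
  by (induction rule: SE.induct) (auto dest: S_val)

lemma SE_pure: "SE E E' \<Longrightarrow> pure E = pure E'"
  by (induction rule: SE.induct) (auto dest: S_val)

lemma plugE_ecomp: "plugE (ecomp A B) t = plugE A (plugE B t)"
  by (induction A) auto

lemma pure_ecomp: "pure (ecomp A B) = (pure A \<and> pure B)"
  by (induction A) auto

lemma pure_ok: "pure E \<Longrightarrow> ectx_ok E"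
  by (induction E) auto

lemma plug_Shift: "plugE E r = Shift s \<Longrightarrow> E = EHole \<and> r = Shift s"
  by (cases E) auto

lemma plug_Lam: "plugE E r = Lam s \<Longrightarrow> E = EHole \<and> r = Lam s"
  by (cases E) auto

lemma plug_Var: "plugE E r = Var s \<Longrightarrow> E = EHole \<and> r = Var s"
  by (cases E) auto

lemma fwd_dec: "S (plugE E r) u \<Longrightarrow> \<exists>E' r'. u = plugE E' r' \<and> SE E E' \<and> S r r'"
proof (induction E arbitrary: u)
  case EHole then show ?case by (metis SE.intros(1) plugE.simps(1))
next
  case (EArgV v E)
  from EArgV.prems obtain v' w where "u = App v' w" "S v v'" "S (plugE E r) w"
    by (auto elim: S_AppL)
  with EArgV.IH show ?case by (metis SE.intros(2) plugE.simps(2))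
next
  case (EFun E a)
  from EFun.prems obtain a' w where "u = App w a'" "S a a'" "S (plugE E r) w"
    by (auto elim: S_AppL)
  with EFun.IH show ?case by (metis SE.intros(3) plugE.simps(3))
next
  case (EReset E)
  from EReset.prems obtain w where "u = Reset w" "S (plugE E r) w"
    by (auto elim: S_ResetL)
  with EReset.IH show ?case by (metis SE.intros(4) plugE.simps(4))
qed

lemma bwd_dec: "ectx_ok E' \<Longrightarrow> (\<forall>s. r' \<noteq> Shift s) \<Longrightarrow> S t (plugE E' r') \<Longrightarrow>
   \<exists>E r. t = plugE E r \<and> SE E E' \<and> S r r'"
proof (induction E' arbitrary: t)
  case EHole then show ?case by (metis SE.intros(1) plugE.simps(1))
next
  case (EArgV v' E')
  from EArgV.prems(3) have "\<exists>v w. t = App v w \<and> S v v' \<and> S w (plugE E' r')"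
    using EArgV.prems(1) by (auto elim!: S_AppR)
  then obtain v w where "t = App v w" "S v v'" "S w (plugE E' r')" by blast
  with EArgV.IH EArgV.prems show ?case by (metis SE.intros(2) plugE.simps(2) ectx_ok.simps(2))
next
  case (EFun E' a')
  from EFun.prems(3) have "\<exists>a w. t = App w a \<and> S a a' \<and> S w (plugE E' r')"
    using EFun.prems(2) by (auto elim!: S_AppR dest: plug_Shift)
  then obtain a w where "t = App w a" "S a a'" "S w (plugE E' r')" by blast
  with EFun.IH EFun.prems show ?case by (metis SE.intros(3) plugE.simps(3) ectx_ok.simps(3))
next
  case (EReset E')
  from EReset.prems(3) obtain w where "t = Reset w" "S w (plugE E' r')"
    by (auto elim: S_ResetR)
  with EReset.IH EReset.prems show ?case by (metis SE.intros(4) plugE.simps(4) ectx_ok.simps(4))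
qed

lemma bwd_pure: "pure F' \<Longrightarrow> S w (plugE F' (Shift s')) \<Longrightarrow>
   (\<exists>F s. w = plugE F (Shift s) \<and> SE F F' \<and> S s s') \<or>
   (\<exists>F. pure F \<and> w = plugE F (Shift I_trm) \<and> s' = I_trm)"
proof (induction F' arbitrary: w)
  case EHole then show ?case by (metis SE.intros(1) plugE.simps(1) S_ShiftR)
next
  case (EArgV v' F')
  from EArgV.prems(2) have "\<exists>v x. w = App v x \<and> S v v' \<and> S x (plugE F' (Shift s'))"
    using EArgV.prems(1) by (auto elim!: S_AppR)
  then obtain v x where h: "w = App v x" "S v v'" "S x (plugE F' (Shift s'))" by blast
  have "is_val v" using h(2) EArgV.prems(1) S_val by auto
  from EArgV.IH[OF _ h(3)] EArgV.prems(1) have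
    "(\<exists>F s. x = plugE F (Shift s) \<and> SE F F' \<and> S s s') \<or>
     (\<exists>F. pure F \<and> x = plugE F (Shift I_trm) \<and> s' = I_trm)" by simp
  then show ?case
  proof
    assume "\<exists>F s. x = plugE F (Shift s) \<and> SE F F' \<and> S s s'"
    then obtain F s where "x = plugE F (Shift s)" "SE F F'" "S s s'" by blast
    then show ?case using h by (metis SE.intros(2) plugE.simps(2))
  next
    assume "\<exists>F. pure F \<and> x = plugE F (Shift I_trm) \<and> s' = I_trm"
    then obtain F where "pure F" "x = plugE F (Shift I_trm)" "s' = I_trm" by blast
    then show ?case using h \<open>is_val v\<close>
      by (metis plugE.simps(2) pure.simps(2))
  qed
next
  case (EFun F' a')
  from EFun.prems(2)[simplified] show ?case
  proof (rule S_AppR)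
    assume "w = Shift I_trm" "plugE F' (Shift s') = Shift I_trm" "a' = Omega"
    then show ?thesis using plug_Shift[of F' "Shift s'"]
      by (metis plugE.simps(1) pure.simps(1) trm.inject(4))
  next
    fix x a
    assume app: "w = App x a" "S a a'" "S x (plugE F' (Shift s'))"
    from EFun.IH[OF _ app(3)] EFun.prems(1) have
      "(\<exists>F s. x = plugE F (Shift s) \<and> SE F F' \<and> S s s') \<or>
       (\<exists>F. pure F \<and> x = plugE F (Shift I_trm) \<and> s' = I_trm)" by simp
    then show ?thesis
    proof
      assume "\<exists>F s. x = plugE F (Shift s) \<and> SE F F' \<and> S s s'"
      then obtain F s where "x = plugE F (Shift s)" "SE F F'" "S s s'" by blast
      then show ?thesis using app by (metis SE.intros(3) plugE.simps(3))
    next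
      assume "\<exists>F. pure F \<and> x = plugE F (Shift I_trm) \<and> s' = I_trm"
      then obtain F where "pure F" "x = plugE F (Shift I_trm)" "s' = I_trm" by blast
      then show ?thesis using app by (metis plugE.simps(3) pure.simps(3))
    qed
  qed
next
  case (EReset F') then show ?case by simp
qed


lemma sim_fwd: assumes "red t t'" "S t u" shows "\<exists>u'. red u u' \<and> S t' u'"
  using assms(1)
proof cases
  case (beta E v s)
  from fwd_dec[of E "App (Lam s) v" u] assms(2) beta obtain E' r' where
    u: "u = plugE E' r'" "SE E E'" "S (App (Lam s) v) r'" by auto
  from u(3) obtain s' v' where r: "r' = App (Lam s') v'" "S s s'" "S v v'"
    by (auto elim!: S_AppL S_LamL)
  have "is_val v'" using r(3) beta S_val by auto
  moreover have "ectx_ok E'" using u(2) beta SE_ok by auto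
  ultimately have "red u (plugE E' (subst s' 0 v'))" using red.beta u r by simp
  moreover have "S t' (plugE E' (subst s' 0 v'))"
    using beta u r by (simp add: SE_plug S_subst)
  ultimately show ?thesis by blast
next
  case (shift E F s)
  from fwd_dec[of E "Reset (plugE F (Shift s))" u] assms(2) shift obtain E' r' where
    u: "u = plugE E' r'" "SE E E'" "S (Reset (plugE F (Shift s))) r'" by auto
  from u(3) obtain w where w: "r' = Reset w" "S (plugE F (Shift s)) w"
    by (auto elim!: S_ResetL)
  from fwd_dec[OF w(2)] obtain F' r'' where
    f: "w = plugE F' r''" "SE F F'" "S (Shift s) r''" by auto
  have ok: "ectx_ok E'" using u(2) shift SE_ok by auto
  have pF: "pure F'" using f(2) shift SE_pure by auto
  from f(3) show ?thesis
  proof (rule S_ShiftL)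
    assume a: "s = I_trm" "r'' = App (Shift I_trm) Omega"
    have "u = plugE E' (Reset (plugE (ecomp F' (EFun EHole Omega)) (Shift I_trm)))"
      using u w f a by (simp add: plugE_ecomp)
    moreover have "pure (ecomp F' (EFun EHole Omega))" using pF by (simp add: pure_ecomp)
    ultimately have "red u (plugE E' (Reset I_trm))"
      using red.shift[OF ok, of "ecomp F' (EFun EHole Omega)" I_trm] by simp
    moreover have "S t' (plugE E' (Reset I_trm))"
      using shift a u by (simp add: SE_plug S.rst S_refl)
    ultimately show ?thesis by blast
  next
    fix s'' assume a: "r'' = Shift s''" "S s s''"
    let ?k' = "Lam (Reset (plugE (liftE F') (Var 0)))"
    have "red u (plugE E' (Reset (subst s'' 0 ?k')))"
      using red.shift[OF ok pF, of s''] u w f a by simp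
    moreover have "S (Lam (Reset (plugE (liftE F) (Var 0)))) ?k'"
      by (intro S.lam S.rst SE_plug SE_lift f(2) S.var)
    then have "S t' (plugE E' (Reset (subst s'' 0 ?k')))"
      using shift u a by (simp add: SE_plug S.rst S_subst)
    ultimately show ?thesis by blast
  qed
next
  case (reset E v)
  from fwd_dec[of E "Reset v" u] assms(2) reset obtain E' r' where
    u: "u = plugE E' r'" "SE E E'" "S (Reset v) r'" by auto
  from u(3) obtain v' where r: "r' = Reset v'" "S v v'" by (auto elim!: S_ResetL)
  have "is_val v'" using r reset S_val by auto
  moreover have "ectx_ok E'" using u(2) reset SE_ok by auto
  ultimately have "red u (plugE E' v')" using red.reset u r by simp
  moreover have "S t' (plugE E' v')" using reset u r by (simp add: SE_plug)
  ultimately show ?thesis by blast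
qed

lemma sim_bwd: assumes "red u u'" "S t u" shows "\<exists>t'. red t t' \<and> S t' u'"
  using assms(1)
proof cases
  case (beta E' v' s')
  from bwd_dec[of E' "App (Lam s') v'" t] assms(2) beta obtain E r where
    u: "t = plugE E r" "SE E E'" "S r (App (Lam s') v')" by auto
  from u(3) obtain s v where r: "r = App (Lam s) v" "S s s'" "S v v'"
    by (auto elim!: S_AppR S_LamR)
  have "is_val v" using r(3) beta S_val by auto
  moreover have "ectx_ok E" using u(2) beta SE_ok by auto
  ultimately have "red t (plugE E (subst s 0 v))" using red.beta u r by simp
  moreover have "S (plugE E (subst s 0 v)) u'"
    using beta u r by (simp add: SE_plug S_subst)
  ultimately show ?thesis by blast
next
  case (shift E' F' s')
  from bwd_dec[of E' "Reset (plugE F' (Shift s'))" t] assms(2) shift obtain E r where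
    u: "t = plugE E r" "SE E E'" "S r (Reset (plugE F' (Shift s')))" by auto
  from u(3) obtain w where w: "r = Reset w" "S w (plugE F' (Shift s'))"
    by (auto elim!: S_ResetR)
  have ok: "ectx_ok E" using u(2) shift SE_ok by auto
  from bwd_pure[OF \<open>pure F'\<close> w(2)] show ?thesis
  proof
    assume "\<exists>F s. w = plugE F (Shift s) \<and> SE F F' \<and> S s s'"
    then obtain F s where f: "w = plugE F (Shift s)" "SE F F'" "S s s'" by blast
    have pF: "pure F" using f(2) shift SE_pure by auto
    let ?k = "Lam (Reset (plugE (liftE F) (Var 0)))"
    have "red t (plugE E (Reset (subst s 0 ?k)))"
      using red.shift[OF ok pF, of s] u w f by simp
    moreover have "S ?k (Lam (Reset (plugE (liftE F') (Var 0))))"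
      by (intro S.lam S.rst SE_plug SE_lift f(2) S.var)
    then have "S (plugE E (Reset (subst s 0 ?k))) u'"
      using shift u f by (simp add: SE_plug S.rst S_subst)
    ultimately show ?thesis by blast
  next
    assume "\<exists>F. pure F \<and> w = plugE F (Shift I_trm) \<and> s' = I_trm"
    then obtain F where f: "pure F" "w = plugE F (Shift I_trm)" "s' = I_trm" by blast
    have "red t (plugE E (Reset I_trm))"
      using red.shift[OF ok f(1), of I_trm] u w f by simp
    moreover have "S (plugE E (Reset I_trm)) u'"
      using shift f u by (simp add: SE_plug S.rst S_refl)
    ultimately show ?thesis by blast
  qed
next
  case (reset E' v')
  from bwd_dec[of E' "Reset v'" t] assms(2) reset obtain E r where
    u: "t = plugE E r" "SE E E'" "S r (Reset v')" by auto
  from u(3) obtain v where r: "r = Reset v" "S v v'" by (auto elim!: S_ResetR)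
  have "is_val v" using r reset S_val by auto
  moreover have "ectx_ok E" using u(2) reset SE_ok by auto
  ultimately have "red t (plugE E v)" using red.reset u r by simp
  moreover have "S (plugE E v) u'" using reset u r by (simp add: SE_plug)
  ultimately show ?thesis by blast
qed

lemma steps_fwd: "red\<^sup>*\<^sup>* t t' \<Longrightarrow> S t u \<Longrightarrow> \<exists>u'. red\<^sup>*\<^sup>* u u' \<and> S t' u'"
proof (induction rule: rtranclp_induct)
  case base then show ?case by blast
next
  case (step y z)
  then obtain u' where "red\<^sup>*\<^sup>* u u'" "S y u'" by blast
  with sim_fwd[OF step(2)] show ?case by (meson rtranclp.rtrancl_into_rtrancl)
qed

lemma steps_bwd: "red\<^sup>*\<^sup>* u u' \<Longrightarrow> S t u \<Longrightarrow> \<exists>t'. red\<^sup>*\<^sup>* t t' \<and> S t' u'"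
proof (induction rule: rtranclp_induct)
  case base then show ?case by blast
next
  case (step y z)
  then obtain t' where "red\<^sup>*\<^sup>* t t'" "S t' y" by blast
  with sim_bwd[OF step(2)] show ?case by (meson rtranclp.rtrancl_into_rtrancl)
qed

lemma irr_fwd: "S t u \<Longrightarrow> irreducible t \<Longrightarrow> irreducible u"
  unfolding irreducible_def using sim_bwd by blast

lemma irr_bwd: "S t u \<Longrightarrow> irreducible u \<Longrightarrow> irreducible t"
  unfolding irreducible_def using sim_fwd by blast

lemma cs_fwd: assumes "S t u" "control_stuck t" shows "control_stuck u"
proof -
  from assms(2) obtain F s where a: "pure F" "t = plugE F (Shift s)"
    unfolding control_stuck_def by blast
  from fwd_dec[of F "Shift s" u] assms(1) a obtain F' r' where
    f: "u = plugE F' r'" "SE F F'" "S (Shift s) r'" by auto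
  have pF: "pure F'" using f(2) a SE_pure by auto
  from f(3) show ?thesis
  proof (rule S_ShiftL)
    assume "s = I_trm" "r' = App (Shift I_trm) Omega"
    then have "u = plugE (ecomp F' (EFun EHole Omega)) (Shift I_trm)"
      using f by (simp add: plugE_ecomp)
    then show ?thesis unfolding control_stuck_def using pF pure_ecomp
      by (metis pure.simps(1) pure.simps(3))
  next
    fix s'' assume "r' = Shift s''"
    then show ?thesis unfolding control_stuck_def using pF f by blast
  qed
qed

lemma cs_bwd: assumes "S t u" "control_stuck u" shows "control_stuck t"
proof -
  from assms(2) obtain F' s' where a: "pure F'" "u = plugE F' (Shift s')"
    unfolding control_stuck_def by blast
  from bwd_pure[OF a(1)] assms(1) a(2) show ?thesis
    unfolding control_stuck_def using SE_pure a(1) by metis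
qed

lemma S_obs: assumes "S t u" shows
  "((\<exists>v. evals t v \<and> is_val v) \<longleftrightarrow> (\<exists>v. evals u v \<and> is_val v)) \<and>
   ((\<exists>v. evals t v \<and> control_stuck v) \<longleftrightarrow> (\<exists>v. evals u v \<and> control_stuck v))"
  unfolding evals_def
  using steps_fwd[OF _ assms] steps_bwd[OF _ assms] irr_fwd irr_bwd S_val cs_fwd cs_bwd
  by metis

lemma S_plugC: "S (plugC C (Shift I_trm)) (plugC C (App (Shift I_trm) Omega))"
  by (induction C) (auto intro: S.intros S_refl)

lemma part1: "ctx_equiv (Shift I_trm) (App (Shift I_trm) Omega)"
  unfolding ctx_equiv_def using S_obs[OF S_plugC] by blast


definition W :: trm where "W = App (Var 0) Omega"

lemma plug_W: assumes that: "plugE E r = App (Var 0) Omega" shows "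
   E = EHole \<or> (E = EArgV (Var 0) EHole \<and> r = Omega) \<or>
   (\<exists>E2. E = EArgV (Var 0) (EArgV (Lam (App (Var 0) (Var 0))) E2) \<and> plugE E2 r = Lam (App (Var 0) (Var 0))) \<or>
   (\<exists>E2. E = EArgV (Var 0) (EFun E2 (Lam (App (Var 0) (Var 0)))) \<and> plugE E2 r = Lam (App (Var 0) (Var 0))) \<or>
   (\<exists>E2. E = EFun E2 Omega \<and> plugE E2 r = Var 0)"
proof (cases E)
  case (EArgV v E1) then show ?thesis using that by (cases E1) (auto simp: Omega_def dest: plug_Lam)
qed (use that in \<open>auto simp: Omega_def\<close>)

lemma plug_W': "App (Var 0) Omega = plugE E r \<Longrightarrow>
   E = EHole \<or> (E = EArgV (Var 0) EHole \<and> r = Omega) \<or>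
   (\<exists>E2. E = EArgV (Var 0) (EArgV (Lam (App (Var 0) (Var 0))) E2) \<and> plugE E2 r = Lam (App (Var 0) (Var 0))) \<or>
   (\<exists>E2. E = EArgV (Var 0) (EFun E2 (Lam (App (Var 0) (Var 0)))) \<and> plugE E2 r = Lam (App (Var 0) (Var 0))) \<or>
   (\<exists>E2. E = EFun E2 Omega \<and> plugE E2 r = Var 0)"
  by (rule plug_W) (rule sym)

lemma plug_Shift': "Shift s = plugE E r \<Longrightarrow> E = EHole \<and> r = Shift s"
  by (rule plug_Shift) (rule sym)
lemma plug_Var': "Var s = plugE E r \<Longrightarrow> E = EHole \<and> r = Var s"
  by (rule plug_Var) (rule sym)

lemma red_W: "red W u \<Longrightarrow> u = W"
  unfolding W_def
  apply (erule red.cases)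
    subgoal by (frule plug_W', auto simp: Omega_def dest!: plug_Lam plug_Var)
    subgoal by (frule plug_W', auto simp: Omega_def dest!: plug_Lam plug_Var)
    subgoal by (frule plug_W', auto simp: Omega_def dest!: plug_Lam plug_Var)
  done

lemma steps_W: "red\<^sup>*\<^sup>* W u \<Longrightarrow> u = W"
  by (induction rule: rtranclp_induct) (auto dest: red_W)

lemma W_red: "red W W"
proof -
  have "red (plugE (EArgV (Var 0) EHole) (App (Lam (App (Var 0) (Var 0))) (Lam (App (Var 0) (Var 0)))))
     (plugE (EArgV (Var 0) EHole) (subst (App (Var 0) (Var 0)) 0 (Lam (App (Var 0) (Var 0)))))"
    by (rule red.beta) auto
  then show ?thesis by (simp add: W_def Omega_def)
qed

lemma W_noeval: "\<not> evals W t"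
  unfolding evals_def irreducible_def using steps_W W_red by blast

lemma irr_Var: "irreducible (Var i)"
  unfolding irreducible_def
  by (auto elim!: red.cases dest!: plug_Var')

lemma irr_ShiftI: "irreducible (Shift I_trm)"
  unfolding irreducible_def
  by (auto elim!: red.cases dest!: plug_Shift')

lemma irr_t1: "irreducible (App (Shift I_trm) Omega)"
  using irr_fwd[OF S.base irr_ShiftI] .

lemma steps_irr: "red\<^sup>*\<^sup>* t u \<Longrightarrow> irreducible t \<Longrightarrow> u = t"
  unfolding irreducible_def by (metis converse_rtranclpE)

lemma ecomp_not_hole: "EHole \<noteq> ecomp A (EReset B)"
  by (cases A) auto

lemma part2: "\<not> nf_bisimilar (Shift I_trm) (App (Shift I_trm) Omega)"
proof
  assume "nf_bisimilar (Shift I_trm) (App (Shift I_trm) Omega)"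
  then obtain R where sim: "nf_sim R" and r: "R (Shift I_trm) (App (Shift I_trm) Omega)"
    unfolding nf_bisimilar_def nf_bisim_def by blast
  have "evals (Shift I_trm) (Shift I_trm)" unfolding evals_def using irr_ShiftI by blast
  with sim r obtain t1' where e: "evals (App (Shift I_trm) Omega) t1'"
      and n: "nf_rel R (Shift I_trm) t1'"
    unfolding nf_sim_def by blast
  from e have t1: "t1' = App (Shift I_trm) Omega"
    unfolding evals_def using steps_irr irr_t1 by blast
  have nd3: "\<not> (\<exists>E0 x v0. Shift I_trm = plugE E0 (App (Var x) v0))"
    by (auto dest!: plug_Shift')
  from n t1 nd3 obtain F0 F1 s0 s1 where
    h: "pure F0" "pure F1" "Shift I_trm = plugE F0 (Shift s0)"
       "App (Shift I_trm) Omega = plugE F1 (Shift s1)" "ctx_rel R F0 F1"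
    unfolding nf_rel_def by fastforce
  have F0: "F0 = EHole" using h(3) plug_Shift by metis
  have F1: "F1 = EFun EHole Omega"
    using h(2) h(4)
    apply (cases F1)
       apply (auto dest!: plug_Shift')
    done
  from h(5) have "R (Var 0) W"
    unfolding ctx_rel_def F0 F1 W_def using ecomp_not_hole by (auto simp: sym[of EHole])
  moreover have "evals (Var 0) (Var 0)" unfolding evals_def using irr_Var by blast
  ultimately obtain u where "evals W u" using sim unfolding nf_sim_def by blast
  then show False using W_noeval by blast
qed

theorem proposition2:
  shows "ctx_equiv (Shift I_trm) (App (Shift I_trm) Omega)
       \<and> \<not> nf_bisimilar (Shift I_trm) (App (Shift I_trm) Omega)"
  using part1 part2 by blast

end
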